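(* Let $(\mathcal{A},\cdot)$ be a commutative associative algebra with an algebra endomorphism $\alpha$ and a derivation $D$ such that $D\alpha=\alpha D$. For any fixed $\lambda\in\mathbb{C}$, define $x\circ y=\alpha(x\cdot D(y))+\lambda\,\alpha(x\cdot y)$ and $[x,y]^-=\alpha(x\cdot D(y))-\alpha(y\cdot D(x))$ for $x,y\in\mathcal{A}$. Then $(\mathcal{A},[\cdot,\cdot]^-,\circ,\alpha)$ is a Hom Gel'fand-Dorfman bialgebra.
   Context: All vector spaces are over $\mathbb{C}$. A derivation of $(\mathcal{A},\cdot)$ is a linear map $D$ with $D(x\cdot y)=D(x)\cdot y+x\cdot D(y)$. A Hom-Novikov algebra is a vector space with a bilinear operation $\circ$ and a linear endomorphism $\alpha$ such that $(x\circ y)\circ\alpha(z)-\alpha(x)\circ(y\circ z)=(y\circ x)\circ\alpha(z)-\alpha(y)\circ(x\circ z)$ and $(x\circ y)\circ\alpha(z)=(x\circ z)\circ\alpha(y)$ for all $x,y,z$. A Hom-Lie algebra is a vector space with a bilinear map $[\cdot,\cdot]$ and linear map $\alpha$ with $[x,y]=-[y,x]$ and $[[x,y],\alpha(z)]+[[y,z],\alpha(x)]+[[z,x],\alpha(y)]=0$. A Hom Gel'fand-Dorfman bialgebra is a vector space $\mathcal{A}$ with a linear endomorphism $\alpha$ and two bilinear operations $[\cdot,\cdot],\circ$ such that $(\mathcal{A},[\cdot,\cdot],\alpha)$ is a Hom-Lie algebra, $(\mathcal{A},\circ,\alpha)$ is a Hom-Novikov algebra, and $[x\circ y,\alpha(z)]-[x\circ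 z,\alpha(y)]+[x,y]\circ\alpha(z)-[x,z]\circ\alpha(y)-\alpha(x)\circ[y,z]=0$ for all $x,y,z$. *)

theory Defs
  imports Main "HOL.Complex"
begin

text \<open>A complex vector space is a carrier type 'a::ab_group_add with a scalar
multiplication sm :: complex => 'a => 'a satisfying vector_space sm; linearity is
Vector_Spaces.linear sm sm.\<close>

definition bilinear_op :: "(complex \<Rightarrow> 'a::ab_group_add \<Rightarrow> 'a) \<Rightarrow> ('a \<Rightarrow> 'a \<Rightarrow> 'a) \<Rightarrow> bool" where
  "bilinear_op sm m \<longleftrightarrow> (\<forall>x. Vector_Spaces.linear sm sm (m x)) \<and> (\<forall>y. Vector_Spaces.linear sm sm (\<lambda>x. m x y))"

definition comm_assoc_algebra :: "(complex \<Rightarrow> 'a::ab_group_add \<Rightarrow> 'a) \<Rightarrow> ('a \<Rightarrow> 'a \<Rightarrow> 'a) \<Rightarrow> bool" where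
  "comm_assoc_algebra sm m \<longleftrightarrow> bilinear_op sm m \<and> (\<forall>x y. m x y = m y x)
     \<and> (\<forall>x y z. m (m x y) z = m x (m y z))"

definition algebra_endomorphism :: "(complex \<Rightarrow> 'a::ab_group_add \<Rightarrow> 'a) \<Rightarrow> ('a \<Rightarrow> 'a \<Rightarrow> 'a) \<Rightarrow> ('a \<Rightarrow> 'a) \<Rightarrow> bool" where
  "algebra_endomorphism sm m \<alpha> \<longleftrightarrow> Vector_Spaces.linear sm sm \<alpha> \<and> (\<forall>x y. \<alpha> (m x y) = m (\<alpha> x) (\<alpha> y))"

definition derivation :: "(complex \<Rightarrow> 'a::ab_group_add \<Rightarrow> 'a) \<Rightarrow> ('a \<Rightarrow> 'a \<Rightarrow> 'a) \<Rightarrow> ('a \<Rightarrow> 'a) \<Rightarrow> bool" where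
  "derivation sm m D \<longleftrightarrow> Vector_Spaces.linear sm sm D \<and> (\<forall>x y. D (m x y) = m (D x) y + m x (D y))"

definition hom_novikov :: "(complex \<Rightarrow> 'a::ab_group_add \<Rightarrow> 'a) \<Rightarrow> ('a \<Rightarrow> 'a \<Rightarrow> 'a) \<Rightarrow> ('a \<Rightarrow> 'a) \<Rightarrow> bool" where
  "hom_novikov sm c \<alpha> \<longleftrightarrow> bilinear_op sm c \<and> Vector_Spaces.linear sm sm \<alpha> \<and>
     (\<forall>x y z. c (c x y) (\<alpha> z) - c (\<alpha> x) (c y z) = c (c y x) (\<alpha> z) - c (\<alpha> y) (c x z)) \<and>
     (\<forall>x y z. c (c x y) (\<alpha> z) = c (c x z) (\<alpha> y))"

definition hom_lie :: "(complex \<Rightarrow> 'a::ab_group_add \<Rightarrow> 'a) \<Rightarrow> ('a \<Rightarrow> 'a \<Rightarrow> 'a) \<Rightarrow> ('a \<Rightarrow> 'a) \<Rightarrow> bool" where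
  "hom_lie sm b \<alpha> \<longleftrightarrow> bilinear_op sm b \<and> Vector_Spaces.linear sm sm \<alpha> \<and>
     (\<forall>x y. b x y = - b y x) \<and>
     (\<forall>x y z. b (b x y) (\<alpha> z) + b (b y z) (\<alpha> x) + b (b z x) (\<alpha> y) = 0)"

definition hom_GD_bialgebra ::
  "(complex \<Rightarrow> 'a::ab_group_add \<Rightarrow> 'a) \<Rightarrow> ('a \<Rightarrow> 'a \<Rightarrow> 'a) \<Rightarrow> ('a \<Rightarrow> 'a \<Rightarrow> 'a) \<Rightarrow> ('a \<Rightarrow> 'a) \<Rightarrow> bool" where
  "hom_GD_bialgebra sm b c \<alpha> \<longleftrightarrow> hom_lie sm b \<alpha> \<and> hom_novikov sm c \<alpha> \<and>
     (\<forall>x y z. b (c x y) (\<alpha> z) - b (c x z) (\<alpha> y) + c (b x y) (\<alpha> z) - c (b x z) (\<alpha> y)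
        - c (\<alpha> x) (b y z) = 0)"

end

theory Submission
  imports Defs
begin

lemma lin_facts:
  assumes "Vector_Spaces.linear sm sm f"
  shows "f (x+y) = f x + f y" "f (sm c x) = sm c (f x)" "f (x - y) = f x - f y"
    "f (-x) = - f x" "f 0 = 0"
proof -
  interpret module_hom sm sm f using assms by (simp add: linear_iff_module_hom)
  show "f (x+y) = f x + f y" "f (sm c x) = sm c (f x)" "f (x - y) = f x - f y"
    "f (-x) = - f x" "f 0 = 0" by (simp_all add: add scale diff neg)
qed

theorem corollary3p10:
  fixes sm :: "complex \<Rightarrow> 'a::ab_group_add \<Rightarrow> 'a"
    and m :: "'a \<Rightarrow> 'a \<Rightarrow> 'a" and \<alpha> D :: "'a \<Rightarrow> 'a" and lam :: complex
  assumes "vector_space sm"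
    and "comm_assoc_algebra sm m"
    and "algebra_endomorphism sm m \<alpha>"
    and "derivation sm m D"
    and "D \<circ> \<alpha> = \<alpha> \<circ> D"
  shows "hom_GD_bialgebra sm
           (\<lambda>x y. \<alpha> (m x (D y)) - \<alpha> (m y (D x)))
           (\<lambda>x y. \<alpha> (m x (D y)) + sm lam (\<alpha> (m x y)))
           \<alpha>"
proof -
  interpret module sm using assms(1) by (simp add: module_iff_vector_space)
  have bil: "bilinear_op sm m" and mc: "\<And>x y. m x y = m y x" and ma: "\<And>x y z. m (m x y) z = m x (m y z)"
    using assms(2) by (auto simp: comm_assoc_algebra_def)
  have ml1: "\<And>y. Vector_Spaces.linear sm sm (\<lambda>x. m x y)" and ml2: "\<And>x. Vector_Spaces.linear sm sm (m x)"
    using bil by (auto simp: bilinear_op_def)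
  have la: "Vector_Spaces.linear sm sm \<alpha>" and ah: "\<And>x y. \<alpha> (m x y) = m (\<alpha> x) (\<alpha> y)"
    using assms(3) by (auto simp: algebra_endomorphism_def)
  have lD: "Vector_Spaces.linear sm sm D" and Dh: "\<And>x y. D (m x y) = m (D x) y + m x (D y)"
    using assms(4) by (auto simp: derivation_def)
  have Da: "\<And>x. D (\<alpha> x) = \<alpha> (D x)" using assms(5) by (metis comp_apply)
  have mlc: "\<And>x y z. m x (m y z) = m y (m x z)" by (metis ma mc)
  note mf1 = lin_facts[OF ml1, simplified] and mf2 = lin_facts[OF ml2] and af = lin_facts[OF la]
    and Df = lin_facts[OF lD]
  note S = mf1 mf2 af Df ah Dh Da ma mc mlc scale_right_distrib scale_right_diff_distrib
  have lin_c1: "Vector_Spaces.linear sm sm (\<lambda>x. \<alpha> (m x (D y)) + sm lam (\<alpha> (m x y)))" for y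
    unfolding Vector_Spaces.linear_iff using assms(1) by (simp add: S algebra_simps scale_left_commute)
  have lin_c2: "Vector_Spaces.linear sm sm (\<lambda>y. \<alpha> (m x (D y)) + sm lam (\<alpha> (m x y)))" for x
    unfolding Vector_Spaces.linear_iff using assms(1) by (simp add: S algebra_simps scale_left_commute)
  have lin_b1: "Vector_Spaces.linear sm sm (\<lambda>x. \<alpha> (m x (D y)) - \<alpha> (m y (D x)))" for y
    unfolding Vector_Spaces.linear_iff using assms(1) by (simp add: S algebra_simps scale_left_commute)
  have lin_b2: "Vector_Spaces.linear sm sm (\<lambda>y. \<alpha> (m x (D y)) - \<alpha> (m y (D x)))" for x
    unfolding Vector_Spaces.linear_iff using assms(1) by (simp add: S algebra_simps scale_left_commute)
  have lie: "hom_lie sm (\<lambda>x y. \<alpha> (m x (D y)) - \<alpha> (m y (D x))) \<alpha>"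
    unfolding hom_lie_def bilinear_op_def using lin_b1 lin_b2 la
    by (simp add: S algebra_simps)
  have nov: "hom_novikov sm (\<lambda>x y. \<alpha> (m x (D y)) + sm lam (\<alpha> (m x y))) \<alpha>"
    unfolding hom_novikov_def bilinear_op_def using lin_c1 lin_c2 la
    by (simp add: S algebra_simps scale_left_commute)
  show ?thesis
    unfolding hom_GD_bialgebra_def using lie nov
    by (simp add: S algebra_simps scale_left_commute)
qed

end
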